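(* Let $-\omega$ be the automorphism of $\mathcal A_\theta^{alg}$ with $U_1\mapsto U_2$, $U_2\mapsto\lambda^{-1/2}U_1^{-1}U_2$, and let $H^0(\mathcal A_\theta^{alg},{}_{-\omega}\mathcal A_\theta^{alg\ast})$ be the space of formal series $\varphi=\sum\varphi_{n,m}U_1^nU_2^m$ with $((-\omega)\cdot a)\varphi=\varphi a$ for all $a\in\mathcal A_\theta^{alg}$. Then every such $\varphi$ is determined by the coefficient $\varphi_{0,0}$, and $\varphi_{n,m}=\lambda^{-\frac{m^2+n^2}{2}}\varphi_{0,0}$ for all $(n,m)\in\mathbb Z^2$.
   Context: Let $\theta\in\mathbb R\setminus\mathbb Q$, $\lambda=e^{2\pi i\theta}$, $\lambda^s:=e^{2\pi i\theta s}$ for $s\in\mathbb R$. $\mathcal A_\theta^{alg}$ is the complex algebra of finite sums $\sum a_{n,m}U_1^nU_2^m$ with $U_1,U_2$ invertible and $U_2U_1=\lambda U_1U_2$; formal series $\sum_{(n,m)\in\mathbb Z^2}\varphi_{n,m}U_1^nU_2^m$ with arbitrary coefficients form an $\mathcal A_\theta^{alg}$-bimodule via left/right multiplication. The automorphism $-\omega$ is the action of $\begin{pmatrix}0&-1\\1&1\end{pmatrix}\in SL(2,\mathbb Z)$, of order $6$. *)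

theory Defs
  imports Complex_Main
begin

definition lam :: "real \<Rightarrow> real \<Rightarrow> complex" where
  "lam \<theta> s = exp (2 * of_real pi * \<i> * of_real (\<theta> * s))"

text \<open>Formal series sum phi(n,m) U1^n U2^m are represented by their coefficient
  functions int \<times> int \<Rightarrow> complex; elements of A_theta^alg are those with finite support.\<close>
definition fsupp :: "(int \<times> int \<Rightarrow> complex) \<Rightarrow> (int \<times> int) set" where
  "fsupp a = {k. a k \<noteq> 0}"

definition is_alg :: "(int \<times> int \<Rightarrow> complex) \<Rightarrow> bool" where
  "is_alg a \<longleftrightarrow> finite (fsupp a)"

text \<open>Normal-ordered monomials multiply by
  U1^p U2^q * U1^c U2^d = lambda^(q c) U1^(p+c) U2^(q+d), from U2 U1 = lambda U1 U2.\<close>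
definition lmult :: "real \<Rightarrow> (int \<times> int \<Rightarrow> complex) \<Rightarrow> (int \<times> int \<Rightarrow> complex) \<Rightarrow> (int \<times> int \<Rightarrow> complex)" where
  "lmult \<theta> a \<phi> = (\<lambda>(n, m). \<Sum>(p, q)\<in>fsupp a. a (p, q) * \<phi> (n - p, m - q) * lam \<theta> (of_int (q * (n - p))))"

definition rmult :: "real \<Rightarrow> (int \<times> int \<Rightarrow> complex) \<Rightarrow> (int \<times> int \<Rightarrow> complex) \<Rightarrow> (int \<times> int \<Rightarrow> complex)" where
  "rmult \<theta> \<phi> a = (\<lambda>(n, m). \<Sum>(c, d)\<in>fsupp a. \<phi> (n - c, m - d) * a (c, d) * lam \<theta> (of_int ((m - d) * c)))"

definition mono :: "int \<Rightarrow> int \<Rightarrow> (int \<times> int \<Rightarrow> complex)" where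
  "mono n m = (\<lambda>k. if k = (n, m) then 1 else 0)"

definition npow :: "real \<Rightarrow> (int \<times> int \<Rightarrow> complex) \<Rightarrow> nat \<Rightarrow> (int \<times> int \<Rightarrow> complex)" where
  "npow \<theta> x k = (lmult \<theta> x ^^ k) (mono 0 0)"

definition zpow :: "real \<Rightarrow> (int \<times> int \<Rightarrow> complex) \<Rightarrow> (int \<times> int \<Rightarrow> complex) \<Rightarrow> int \<Rightarrow> (int \<times> int \<Rightarrow> complex)" where
  "zpow \<theta> x xi k = (if 0 \<le> k then npow \<theta> x (nat k) else npow \<theta> xi (nat (- k)))"

text \<open>Images of the generators under -omega and their inverses:
  U1 \<mapsto> U2, U2 \<mapsto> lambda^(-1/2) U1^(-1) U2 (inverse lambda^(1/2) U2^(-1) U1).\<close>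
definition W1 :: "(int \<times> int \<Rightarrow> complex)" where "W1 = mono 0 1"
definition W1i :: "(int \<times> int \<Rightarrow> complex)" where "W1i = mono 0 (-1)"
definition W2 :: "real \<Rightarrow> (int \<times> int \<Rightarrow> complex)" where
  "W2 \<theta> = (\<lambda>k. lam \<theta> (-1/2) * mono (-1) 1 k)"
definition W2i :: "real \<Rightarrow> (int \<times> int \<Rightarrow> complex)" where
  "W2i \<theta> = (\<lambda>k. lam \<theta> (1/2) * lmult \<theta> (mono 0 (-1)) (mono 1 0) k)"

definition minus_omega :: "real \<Rightarrow> (int \<times> int \<Rightarrow> complex) \<Rightarrow> (int \<times> int \<Rightarrow> complex)" where
  "minus_omega \<theta> a = (\<lambda>k. \<Sum>(n, m)\<in>fsupp a.
      a (n, m) * lmult \<theta> (zpow \<theta> W1 W1i n) (zpow \<theta> (W2 \<theta>) (W2i \<theta>) m) k)"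

end

theory Submission
  imports Defs
begin

lemma lam_add: "lam t s * lam t u = lam t (s + u)"
  unfolding lam_def by (simp add: exp_add[symmetric] algebra_simps)

lemma lam_zero[simp]: "lam t 0 = 1"
  unfolding lam_def by simp

lemma lam_nz[simp]: "lam t s \<noteq> 0"
  unfolding lam_def by simp

lemma fsupp_mono[simp]: "fsupp (mono p q) = {(p,q)}"
  unfolding fsupp_def mono_def by auto

lemma is_alg_mono: "is_alg (mono p q)"
  unfolding is_alg_def by simp

lemma lmult_mono: "lmult t (mono p q) f (n,m) = f (n-p, m-q) * lam t (of_int (q*(n-p)))"
  unfolding lmult_def fsupp_mono by (simp add: mono_def)

lemma rmult_mono: "rmult t f (mono c d) (n,m) = f (n-c, m-d) * lam t (of_int ((m-d)*c))"
  unfolding rmult_def fsupp_mono by (simp add: mono_def)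

lemma lmult_mono00: "lmult t (mono 0 0) f = f"
proof
  fix k :: "int \<times> int" obtain n m where k: "k = (n,m)" by fastforce
  show "lmult t (mono 0 0) f k = f k" unfolding k lmult_mono by simp
qed

lemma fsupp_W2: "fsupp (W2 t) = {(-1,1)}"
  unfolding fsupp_def W2_def mono_def by auto

lemma lmult_W2: "lmult t (W2 t) f (n,m) = lam t (-1/2) * f (n+1, m-1) * lam t (of_int (n+1))"
  unfolding lmult_def fsupp_W2 by (simp add: W2_def mono_def)

lemma mono01: "lmult t (mono 0 1) (mono 0 0) = mono 0 1"
proof
  fix k :: "int \<times> int" obtain n m where k: "k = (n,m)" by fastforce
  show "lmult t (mono 0 1) (mono 0 0) k = mono 0 1 k" unfolding k lmult_mono
    by (auto simp: mono_def)
qed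

lemma W2_00: "lmult t (W2 t) (mono 0 0) = W2 t"
proof
  fix k :: "int \<times> int" obtain n m where k: "k = (n,m)" by fastforce
  show "lmult t (W2 t) (mono 0 0) k = W2 t k" unfolding k lmult_W2
    by (auto simp: mono_def W2_def)
qed

lemma mo1: "minus_omega t (mono 1 0) = mono 0 1"
proof
  fix k
  show "minus_omega t (mono 1 0) k = mono 0 1 k"
    unfolding minus_omega_def fsupp_mono
    by (simp add: mono_def[of 1 0] zpow_def npow_def W1_def mono01 lmult_mono00)
qed

lemma mo2: "minus_omega t (mono 0 1) = W2 t"
proof
  fix k
  show "minus_omega t (mono 0 1) k = W2 t k"
    unfolding minus_omega_def fsupp_mono
    by (simp add: mono_def[of 0 1] zpow_def npow_def W2_00 lmult_mono00)
qed

theorem mainTheorem8: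
  fixes \<theta> :: real and \<phi> :: "int \<times> int \<Rightarrow> complex"
  assumes "\<theta> \<notin> \<rat>"
    and "\<forall>a. is_alg a \<longrightarrow> lmult \<theta> (minus_omega \<theta> a) \<phi> = rmult \<theta> \<phi> a"
  shows "\<forall>n m. \<phi> (n, m) = lam \<theta> (- (of_int (m^2 + n^2)) / 2) * \<phi> (0, 0)"
proof -
  have e1: "lmult \<theta> (mono 0 1) \<phi> = rmult \<theta> \<phi> (mono 1 0)"
    using assms(2) is_alg_mono mo1 by metis
  have e2: "lmult \<theta> (W2 \<theta>) \<phi> = rmult \<theta> \<phi> (mono 0 1)"
    using assms(2) is_alg_mono mo2 by metis
  have c1: "\<phi> (n, m-1) * lam \<theta> (of_int n) = \<phi> (n-1, m) * lam \<theta> (of_int m)" for n m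
    using fun_cong[OF e1, of "(n,m)"] unfolding lmult_mono rmult_mono by simp
  have c2: "lam \<theta> (-1/2) * \<phi> (n+1, m-1) * lam \<theta> (of_int (n+1)) = \<phi> (n, m-1)" for n m
    using fun_cong[OF e2, of "(n,m)"] unfolding lmult_W2 rmult_mono by simp
  have r1: "\<phi> (n,m) = lam \<theta> (of_int n + 1/2) * \<phi> (n+1,m)" for n m
  proof -
    have "\<phi> (n,m) = lam \<theta> (-1/2) * lam \<theta> (of_int (n+1)) * \<phi> (n+1,m)"
      using c2[of n "m+1"] by (simp add: mult_ac)
    also have "\<dots> = lam \<theta> (of_int n + 1/2) * \<phi> (n+1,m)"
      by (simp add: lam_add add_ac)
    finally show ?thesis .
  qed
  have r2: "\<phi> (n,m) = lam \<theta> (of_int m + 1/2) * \<phi> (n,m+1)" for n m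
  proof -
    have a: "\<phi> (n+1,m) * lam \<theta> (of_int (n+1)) = \<phi> (n,m+1) * lam \<theta> (of_int (m+1))"
      using c1[of "n+1" "m+1"] by simp
    have "\<phi> (n,m) = lam \<theta> (-1/2) * (\<phi> (n+1,m) * lam \<theta> (of_int (n+1)))"
      using c2[of n "m+1"] by (simp add: mult_ac)
    also have "\<dots> = lam \<theta> (-1/2) * lam \<theta> (of_int (m+1)) * \<phi> (n,m+1)"
      using a by (simp add: mult_ac)
    also have "\<dots> = lam \<theta> (of_int m + 1/2) * \<phi> (n,m+1)"
      by (simp add: lam_add add_ac)
    finally show ?thesis .
  qed
  define \<psi> where "\<psi> n m = lam \<theta> (of_int (m^2 + n^2) / 2) * \<phi> (n,m)" for n m
  have s1: "\<psi> (n+1) m = \<psi> n m" for n m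
  proof -
    have "\<psi> n m = lam \<theta> (of_int (m^2 + n^2) / 2) * lam \<theta> (of_int n + 1/2) * \<phi> (n+1,m)"
      unfolding \<psi>_def using r1[of n m] by (simp add: mult_ac)
    also have "\<dots> = \<psi> (n+1) m" unfolding \<psi>_def lam_add
      by (simp add: power2_eq_square algebra_simps add_divide_distrib)
    finally show ?thesis by simp
  qed
  have s2: "\<psi> n (m+1) = \<psi> n m" for n m
  proof -
    have "\<psi> n m = lam \<theta> (of_int (m^2 + n^2) / 2) * lam \<theta> (of_int m + 1/2) * \<phi> (n,m+1)"
      unfolding \<psi>_def using r2[of n m] by (simp add: mult_ac)
    also have "\<dots> = \<psi> n (m+1)" unfolding \<psi>_def lam_add
      by (simp add: power2_eq_square algebra_simps add_divide_distrib)
    finally show ?thesis by simp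
  qed
  have t1: "\<psi> n m = \<psi> 0 m" for n m
  proof (induction n rule: int_induct[where k=0])
    case base then show ?case by simp
  next
    case (step1 i) then show ?case using s1 by simp
  next
    case (step2 i) then show ?case using s1[of "i-1" m] by simp
  qed
  have t2: "\<psi> 0 m = \<psi> 0 0" for m
  proof (induction m rule: int_induct[where k=0])
    case base then show ?case by simp
  next
    case (step1 i) then show ?case using s2 by simp
  next
    case (step2 i) then show ?case using s2[of 0 "i-1"] by simp
  qed
  show ?thesis
  proof (intro allI)
    fix n m
    have "\<psi> n m = \<phi> (0,0)" using t1 t2 by (simp add: \<psi>_def)
    hence "lam \<theta> (- (of_int (m^2 + n^2)) / 2) * \<psi> n m = lam \<theta> (- (of_int (m^2 + n^2)) / 2) * \<phi> (0,0)"
      by simp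
    moreover have "lam \<theta> (- (of_int (m^2 + n^2)) / 2) * \<psi> n m = \<phi> (n,m)"
      unfolding \<psi>_def mult.assoc[symmetric] lam_add by (simp add: diff_divide_distrib[symmetric] add_divide_distrib[symmetric])
    ultimately show "\<phi> (n, m) = lam \<theta> (- (of_int (m^2 + n^2)) / 2) * \<phi> (0, 0)" by simp
  qed
qed

end
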